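(* For every finite alphabet $\Sigma$ and every language $\mathbb{L}\subseteq\Sigma^*$: $\mathbb{L}$ is PTL-definable if and only if $\mathbb{L}=\mathbb{L}(\phi)$ for some $\mathbf{PFO}^2$ sentence $\phi$ over $\Sigma$.
   Context: Fix a finite alphabet $\Sigma$. Formulas of $\mathbf{PTL}$ over $\Sigma$ are generated by: $\pi_a$ for each $a\in\Sigma$; $\psi_1\wedge\psi_2$; $\neg\psi$; $\mathbf{P}\psi$ ("past"). For $w=w_1\cdots w_N\in\Sigma^*$ and $n\in\{1,\dots,N+1\}$: $w,n\models\pi_a$ iff $n\le N$ and $w_n=a$; $w,n\models\psi_1\wedge\psi_2$ iff both hold; $w,n\models\neg\psi$ iff $w,n\not\models\psi$; $w,n\models\mathbf{P}\psi$ iff there is $m$ with $1\le m<n$ and $w,m\models\psi$. Write $w\models\psi$ iff $w,N+1\models\psi$, and $\mathbb{L}(\psi)=\{w\in\Sigma^*:w\models\psi\}$; a language is PTL-definable if it equals $\mathbb{L}(\psi)$ for some PTL formula $\psi$. Formulas of $\mathbf{PFO}^2$ over $\Sigma$ use only two position variables $x,y$ (which may be re-quantified). Atomic formulas are $\pi_a(z)$ ($a\in\Sigma$, $z\in\{x,y\}$; "position $z$ carries $a$") and $z<z'$ ($z,z'\in\{x,y\}$). Formulas are closed under $\wedge$ and $\neg$ and under the quantifier formations: from $\phi(x,y)$ form $\exists y<x:\phi(x,y)$ and $\exists x<y:\phi(x,y)$; from a formula $\phi(x)$ whose only free variable is $x$ form $\exists x<y:\phi(x)$ (free variable $y$) and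 $\exists x:\phi(x)$ (no free variable); and symmetrically with $x,y$ interchanged. $\exists y<x:\phi$ means there is a position $y<x$ satisfying $\phi$. On a string $w$ of length $N$, quantified variables range over $\{1,\dots,N\}$, a free variable may be assigned any position in $\{1,\dots,N+1\}$, and $\pi_a(z)$ holds iff $z\le N$ and $w_z=a$. A sentence is a formula with no free variables; it defines $\mathbb{L}(\phi)=\{w\in\Sigma^*:w\models\phi\}$. *)

theory Defs
  imports Main
begin

text \<open>Strings over the alphabet 'a are lists; positions are 1-based:
  position n of w (1 <= n <= length w) carries the letter w ! (n - 1),
  and position length w + 1 is the extra "end" position.\<close>

datatype 'a ptl =
    PPi 'a
  | PAnd "'a ptl" "'a ptl"
  | PNot "'a ptl"
  | PPast "'a ptl"

fun ptl_sat :: "'a list \<Rightarrow> nat \<Rightarrow> 'a ptl \<Rightarrow> bool" where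
  "ptl_sat w n (PPi a) = (n \<le> length w \<and> w ! (n - 1) = a)"
| "ptl_sat w n (PAnd p q) = (ptl_sat w n p \<and> ptl_sat w n q)"
| "ptl_sat w n (PNot p) = (\<not> ptl_sat w n p)"
| "ptl_sat w n (PPast p) = (\<exists>m. 1 \<le> m \<and> m < n \<and> ptl_sat w m p)"

definition ptl_models :: "'a list \<Rightarrow> 'a ptl \<Rightarrow> bool" where
  "ptl_models w p = ptl_sat w (length w + 1) p"

definition ptl_lang :: "'a ptl \<Rightarrow> 'a list set" where
  "ptl_lang p = {w. ptl_models w p}"

definition ptl_definable :: "'a list set \<Rightarrow> bool" where
  "ptl_definable L = (\<exists>p. L = ptl_lang p)"

datatype var = VX | VY

text \<open>Raw syntax; the quantifier formations of PFO2 are enforced by pfo_wf.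
  FExLess z z' phi stands for (exists z < z' : phi); FEx z phi for (exists z : phi).\<close>
datatype 'a pfo =
    FPi 'a var
  | FLess var var
  | FAnd "'a pfo" "'a pfo"
  | FNot "'a pfo"
  | FExLess var var "'a pfo"
  | FEx var "'a pfo"

fun pfo_free :: "'a pfo \<Rightarrow> var set" where
  "pfo_free (FPi a z) = {z}"
| "pfo_free (FLess z z') = {z, z'}"
| "pfo_free (FAnd p q) = pfo_free p \<union> pfo_free q"
| "pfo_free (FNot p) = pfo_free p"
| "pfo_free (FExLess z z' p) = (pfo_free p - {z}) \<union> {z'}"
| "pfo_free (FEx z p) = pfo_free p - {z}"

fun pfo_wf :: "'a pfo \<Rightarrow> bool" where
  "pfo_wf (FPi a z) = True"
| "pfo_wf (FLess z z') = True"
| "pfo_wf (FAnd p q) = (pfo_wf p \<and> pfo_wf q)"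
| "pfo_wf (FNot p) = pfo_wf p"
| "pfo_wf (FExLess z z' p) = (z \<noteq> z' \<and> pfo_wf p)"
| "pfo_wf (FEx z p) = (pfo_wf p \<and> pfo_free p \<subseteq> {z})"

definition pfo_sentence :: "'a pfo \<Rightarrow> bool" where
  "pfo_sentence p = (pfo_wf p \<and> pfo_free p = {})"

fun pfo_sat :: "'a list \<Rightarrow> (var \<Rightarrow> nat) \<Rightarrow> 'a pfo \<Rightarrow> bool" where
  "pfo_sat w s (FPi a z) = (s z \<le> length w \<and> w ! (s z - 1) = a)"
| "pfo_sat w s (FLess z z') = (s z < s z')"
| "pfo_sat w s (FAnd p q) = (pfo_sat w s p \<and> pfo_sat w s q)"
| "pfo_sat w s (FNot p) = (\<not> pfo_sat w s p)"
| "pfo_sat w s (FExLess z z' p) =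
     (\<exists>m. 1 \<le> m \<and> m \<le> length w \<and> m < s z' \<and> pfo_sat w (s(z := m)) p)"
| "pfo_sat w s (FEx z p) =
     (\<exists>m. 1 \<le> m \<and> m \<le> length w \<and> pfo_sat w (s(z := m)) p)"

text \<open>For a sentence the assignment is irrelevant; we fix both variables to
  the end position length w + 1.\<close>
definition pfo_models :: "'a list \<Rightarrow> 'a pfo \<Rightarrow> bool" where
  "pfo_models w p = pfo_sat w (\<lambda>_. length w + 1) p"

definition pfo_lang :: "'a pfo \<Rightarrow> 'a list set" where
  "pfo_lang p = {w. pfo_models w p}"

end

theory Submission
  imports Defs
begin

section \<open>PTL to PFO2\<close>

fun other :: "var \<Rightarrow> var" where
  "other VX = VY" | "other VY = VX"

lemma other_neq[simp]: "other z \<noteq> z" by (cases z) auto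

fun tr :: "var \<Rightarrow> 'a ptl \<Rightarrow> 'a pfo" where
  "tr z (PPi a) = FPi a z"
| "tr z (PAnd p q) = FAnd (tr z p) (tr z q)"
| "tr z (PNot p) = FNot (tr z p)"
| "tr z (PPast p) = FExLess (other z) z (tr (other z) p)"

lemma tr_sem: "s z = n \<Longrightarrow> n \<le> length w + 1 \<Longrightarrow> pfo_sat w s (tr z p) = ptl_sat w n p"
proof (induction p arbitrary: z s n)
  case (PPast p)
  have "pfo_sat w s (tr z (PPast p)) =
    (\<exists>m. 1 \<le> m \<and> m \<le> length w \<and> m < n \<and> pfo_sat w (s(other z := m)) (tr (other z) p))"
    using PPast.prems by simp
  also have "\<dots> = (\<exists>m. 1 \<le> m \<and> m \<le> length w \<and> m < n \<and> ptl_sat w m p)"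
    using PPast.IH by (metis fun_upd_same le_SucI add.commute plus_1_eq_Suc)
  also have "\<dots> = ptl_sat w n (PPast p)" using PPast.prems by auto
  finally show ?case .
qed auto

lemma tr_wf: "pfo_wf (tr z p)"
  by (induction p arbitrary: z) auto

lemma tr_free: "pfo_free (tr z p) \<subseteq> {z}"
  by (induction p arbitrary: z) fastforce+

definition pfalse :: "'a pfo" where "pfalse = FEx VX (FLess VX VX)"

fun top :: "'a ptl \<Rightarrow> 'a pfo" where
  "top (PPi a) = pfalse"
| "top (PAnd p q) = FAnd (top p) (top q)"
| "top (PNot p) = FNot (top p)"
| "top (PPast p) = FEx VX (tr VX p)"

lemma top_sentence: "pfo_wf (top p) \<and> pfo_free (top p) = {}"
  by (induction p) (auto simp: pfalse_def tr_wf dest: subsetD[OF tr_free])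

lemma top_sem: "pfo_sat w s (top p) = ptl_sat w (length w + 1) p"
proof (induction p arbitrary: s)
  case (PPast p)
  show ?case using tr_sem[of "s(VX := m)" VX m w p for m] by auto
qed (auto simp: pfalse_def)

lemma dir1: "ptl_definable L \<Longrightarrow> \<exists>\<phi> :: 'a pfo. pfo_sentence \<phi> \<and> L = pfo_lang \<phi>"
  unfolding ptl_definable_def
  apply (elim exE)
  subgoal for p
    apply (rule exI[of _ "top p"])
    using top_sentence[of p]
    by (auto simp: pfo_sentence_def pfo_lang_def ptl_lang_def pfo_models_def ptl_models_def top_sem)
  done


section \<open>PFO2 to PTL\<close>

definition ptrue :: "'a ptl" where
  "ptrue = PNot (PAnd (PPi undefined) (PNot (PPi undefined)))"

lemma ptrue_sat[simp]: "ptl_sat w n ptrue" by (simp add: ptrue_def)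

definition POr :: "'a ptl \<Rightarrow> 'a ptl \<Rightarrow> 'a ptl" where
  "POr p q = PNot (PAnd (PNot p) (PNot q))"

lemma POr_sat[simp]: "ptl_sat w n (POr p q) = (ptl_sat w n p \<or> ptl_sat w n q)"
  by (simp add: POr_def)

fun bigor :: "'a ptl list \<Rightarrow> 'a ptl" where
  "bigor [] = PNot ptrue"
| "bigor (p # ps) = POr p (bigor ps)"

lemma bigor_sat: "ptl_sat w n (bigor ps) = (\<exists>p\<in>set ps. ptl_sat w n p)"
  by (induction ps) auto

datatype cmp3 = CLT | CEQ | CGT

definition cmp :: "(var \<Rightarrow> nat) \<Rightarrow> cmp3" where
  "cmp s = (if s VX < s VY then CLT else if s VX = s VY then CEQ else CGT)"

type_synonym 'a clause = "cmp3 set \<times> (var \<Rightarrow> 'a ptl) \<times> 'a ptl"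

fun csat :: "'a list \<Rightarrow> (var \<Rightarrow> nat) \<Rightarrow> 'a clause \<Rightarrow> bool" where
  "csat w s (R, f, g) = (cmp s \<in> R \<and> ptl_sat w (s VX) (f VX) \<and> ptl_sat w (s VY) (f VY)
     \<and> ptl_sat w (length w + 1) g)"

definition dsat :: "'a list \<Rightarrow> (var \<Rightarrow> nat) \<Rightarrow> 'a clause list \<Rightarrow> bool" where
  "dsat w s cs = (\<exists>c\<in>set cs. csat w s c)"

definition good :: "('a list \<Rightarrow> (var \<Rightarrow> nat) \<Rightarrow> bool) \<Rightarrow> bool" where
  "good P = (\<exists>cs. \<forall>w s. (\<forall>v. s v \<le> length w + 1) \<longrightarrow> (P w s = dsat w s cs))"

fun cconj :: "'a clause \<Rightarrow> 'a clause \<Rightarrow> 'a clause" where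
  "cconj (R1, f1, g1) (R2, f2, g2) = (R1 \<inter> R2, \<lambda>v. PAnd (f1 v) (f2 v), PAnd g1 g2)"

lemma cconj_sat: "csat w s (cconj c d) = (csat w s c \<and> csat w s d)"
  by (cases c; cases d) auto

definition dconj :: "'a clause list \<Rightarrow> 'a clause list \<Rightarrow> 'a clause list" where
  "dconj cs ds = [cconj c d. c \<leftarrow> cs, d \<leftarrow> ds]"

lemma dconj_sat: "dsat w s (dconj cs ds) = (dsat w s cs \<and> dsat w s ds)"
  by (auto simp: dconj_def dsat_def cconj_sat)

fun cneg :: "'a clause \<Rightarrow> 'a clause list" where
  "cneg (R, f, g) = [(- R, \<lambda>_. ptrue, ptrue),
     (UNIV, (\<lambda>_. ptrue)(VX := PNot (f VX)), ptrue),
     (UNIV, (\<lambda>_. ptrue)(VY := PNot (f VY)), ptrue),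
     (UNIV, \<lambda>_. ptrue, PNot g)]"

lemma cneg_sat: "dsat w s (cneg c) = (\<not> csat w s c)"
  by (cases c) (auto simp: dsat_def)

fun dneg :: "'a clause list \<Rightarrow> 'a clause list" where
  "dneg [] = [(UNIV, \<lambda>_. ptrue, ptrue)]"
| "dneg (c # cs) = dconj (cneg c) (dneg cs)"

lemma dneg_sat: "dsat w s (dneg cs) = (\<not> dsat w s cs)"
proof (induction cs)
  case Nil show ?case by (simp add: dsat_def)
next
  case (Cons c cs)
  then show ?case by (simp add: dconj_sat cneg_sat) (auto simp: dsat_def)
qed

lemma pfo_coinc: "(\<forall>v\<in>pfo_free p. s v = s' v) \<Longrightarrow> pfo_sat w s p = pfo_sat w s' p"
proof (induction p arbitrary: s s')
  case (FExLess z z' p)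
  have "\<And>m. pfo_sat w (s(z := m)) p = pfo_sat w (s'(z := m)) p"
    by (rule FExLess.IH) (use FExLess.prems in auto)
  then show ?case using FExLess.prems by simp
next
  case (FEx z p)
  have "\<And>m. pfo_sat w (s(z := m)) p = pfo_sat w (s'(z := m)) p"
    by (rule FEx.IH) (use FEx.prems in auto)
  then show ?case by simp
next
  case (FAnd p q)
  have "pfo_sat w s p = pfo_sat w s' p" "pfo_sat w s q = pfo_sat w s' q"
    by (rule FAnd.IH; use FAnd.prems in auto)+
  then show ?case by simp
qed auto

definition rel :: "var \<Rightarrow> cmp3" where
  "rel z = (if z = VX then CLT else CGT)"

fun qclause :: "var \<Rightarrow> 'a clause \<Rightarrow> 'a clause" where
  "qclause z (R, f, g) = (UNIV, (\<lambda>_. ptrue)(other z := PAnd (f (other z)) (PPast (f z))), g)"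

fun eclause :: "var \<Rightarrow> 'a clause \<Rightarrow> 'a clause" where
  "eclause z (R, f, g) = (UNIV, \<lambda>_. ptrue, PAnd g (PAnd (f (other z)) (PPast (f z))))"

lemma cmp_upd: "m < s (other z) \<Longrightarrow> cmp (s(z := m)) = rel z"
  by (cases z) (auto simp: cmp_def rel_def)

lemma other_cases: "z' \<noteq> z \<Longrightarrow> z' = other z"
  by (cases z; cases z') auto

lemma qclause_sat:
  assumes "s (other z) \<le> length w + 1"
  shows "csat w s (qclause z (R, f, g)) =
    ((\<exists>m. 1 \<le> m \<and> m \<le> length w \<and> m < s (other z) \<and> ptl_sat w m (f z)) \<and>
     ptl_sat w (s (other z)) (f (other z)) \<and> ptl_sat w (length w + 1) g)"
proof -
  have "(\<exists>m. 1 \<le> m \<and> m < s (other z) \<and> ptl_sat w m (f z)) =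
        (\<exists>m. 1 \<le> m \<and> m \<le> length w \<and> m < s (other z) \<and> ptl_sat w m (f z))"
    using assms by (metis Suc_eq_plus1 less_Suc_eq_le order_less_le_trans)
  then show ?thesis by (cases z) auto
qed

lemma good_exless:
  assumes "good (\<lambda>w s. pfo_sat w s p)"
  shows "good (\<lambda>w s. pfo_sat w s (FExLess z (other z) p))"
proof -
  obtain cs where cs: "\<And>w s. (\<forall>v. s v \<le> length w + 1) \<Longrightarrow> pfo_sat w s p = dsat w s cs"
    using assms unfolding good_def by blast
  let ?ds = "map (qclause z) (filter (\<lambda>(R, f, g). rel z \<in> R) cs)"
  show ?thesis unfolding good_def
  proof (intro exI allI impI)
    fix w :: "'a list" and s :: "var \<Rightarrow> nat"
    assume rng: "\<forall>v. s v \<le> length w + 1"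
    let ?A = "\<lambda>m. 1 \<le> m \<and> m \<le> length w \<and> m < s (other z)"
    have percl: "(\<exists>m. ?A m \<and> csat w (s(z := m)) (R, f, g)) =
        (rel z \<in> R \<and> (\<exists>m. ?A m \<and> ptl_sat w m (f z)) \<and>
         ptl_sat w (s (other z)) (f (other z)) \<and> ptl_sat w (length w + 1) g)" for R f g
    proof -
      have "csat w (s(z := m)) (R, f, g) = (rel z \<in> R \<and>
        ptl_sat w m (f z) \<and> ptl_sat w (s (other z)) (f (other z)) \<and> ptl_sat w (length w + 1) g)"
        if "m < s (other z)" for m
        using cmp_upd[of m s z, OF that] by (cases z) auto
      then show ?thesis by blast
    qed
    have rt: "\<forall>v. (s(z := m)) v \<le> length w + 1" if "m \<le> length w" for m
      using rng that by auto
    have "pfo_sat w s (FExLess z (other z) p) = (\<exists>m. ?A m \<and> pfo_sat w (s(z := m)) p)"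
      by simp
    also have "\<dots> = (\<exists>m. ?A m \<and> dsat w (s(z := m)) cs)"
      using cs[OF rt] by blast
    also have "\<dots> = (\<exists>c\<in>set cs. \<exists>m. ?A m \<and> csat w (s(z := m)) c)"
      unfolding dsat_def by blast
    also have "\<dots> = (\<exists>c\<in>set cs. case c of (R, f, g) \<Rightarrow> rel z \<in> R \<and>
        (\<exists>m. ?A m \<and> ptl_sat w m (f z)) \<and>
         ptl_sat w (s (other z)) (f (other z)) \<and> ptl_sat w (length w + 1) g)"
      apply (rule bex_cong[OF refl])
      subgoal for c by (cases c) (simp only: percl prod.case)
      done
    also have "\<dots> = dsat w s ?ds"
    proof -
      have q: "csat w s (qclause z (R, f, g)) =
        ((\<exists>m. ?A m \<and> ptl_sat w m (f z)) \<and>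
         ptl_sat w (s (other z)) (f (other z)) \<and> ptl_sat w (length w + 1) g)" for R f g
        using qclause_sat[of s z w R f g] rng by blast
      have "dsat w s ?ds = (\<exists>c\<in>set cs. rel z \<in> fst c \<and> csat w s (qclause z c))"
        unfolding dsat_def set_map set_filter by (auto simp del: csat.simps qclause.simps simp: split_beta) (metis fst_conv)+
      also have "\<dots> = (\<exists>c\<in>set cs. case c of (R, f, g) \<Rightarrow> rel z \<in> R \<and>
        (\<exists>m. ?A m \<and> ptl_sat w m (f z)) \<and>
         ptl_sat w (s (other z)) (f (other z)) \<and> ptl_sat w (length w + 1) g)"
        apply (rule bex_cong[OF refl])
        subgoal for c by (cases c) (simp only: q prod.case fst_conv)
        done
      finally show ?thesis by simp
    qed
    finally show "pfo_sat w s (FExLess z (other z) p) = dsat w s ?ds" .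
  qed
qed

lemma good_ex:
  assumes "good (\<lambda>w s. pfo_sat w s p)" and fr: "pfo_free p \<subseteq> {z}"
  shows "good (\<lambda>w s. pfo_sat w s (FEx z p))"
proof -
  obtain cs where cs: "\<And>w s. (\<forall>v. s v \<le> length w + 1) \<Longrightarrow> pfo_sat w s p = dsat w s cs"
    using assms unfolding good_def by blast
  let ?ds = "map (eclause z) (filter (\<lambda>(R, f, g). rel z \<in> R) cs)"
  show ?thesis unfolding good_def
  proof (intro exI allI impI)
    fix w :: "'a list" and s :: "var \<Rightarrow> nat"
    assume rng: "\<forall>v. s v \<le> length w + 1"
    let ?t = "\<lambda>m. (s(z := m))(other z := length w + 1)"
    let ?A = "\<lambda>m. 1 \<le> m \<and> m \<le> length w"
    have co: "pfo_sat w (s(z := m)) p = pfo_sat w (?t m) p" for m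
      by (rule pfo_coinc) (use fr in auto)
    have rt: "\<forall>v. ?t m v \<le> length w + 1" if "m \<le> length w" for m
      using rng that by auto
    have percl: "(\<exists>m. ?A m \<and> csat w (?t m) (R, f, g)) =
        (rel z \<in> R \<and> (\<exists>m. ?A m \<and> ptl_sat w m (f z)) \<and>
         ptl_sat w (length w + 1) (f (other z)) \<and> ptl_sat w (length w + 1) g)" for R f g
    proof -
      have "csat w (?t m) (R, f, g) = (rel z \<in> R \<and>
        ptl_sat w m (f z) \<and> ptl_sat w (length w + 1) (f (other z)) \<and> ptl_sat w (length w + 1) g)"
        if "m \<le> length w" for m
      proof -
        have "cmp (?t m) = rel z" using that by (cases z) (auto simp: cmp_def rel_def)
        then show ?thesis by (cases z) auto
      qed
      then show ?thesis by blast
    qed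
    have "pfo_sat w s (FEx z p) = (\<exists>m. ?A m \<and> pfo_sat w (?t m) p)"
      unfolding pfo_sat.simps(6) co by blast
    also have "\<dots> = (\<exists>m. ?A m \<and> dsat w (?t m) cs)"
      using cs[OF rt] by blast
    also have "\<dots> = (\<exists>c\<in>set cs. \<exists>m. ?A m \<and> csat w (?t m) c)"
      unfolding dsat_def by blast
    also have "\<dots> = (\<exists>c\<in>set cs. case c of (R, f, g) \<Rightarrow> rel z \<in> R \<and>
        (\<exists>m. ?A m \<and> ptl_sat w m (f z)) \<and>
         ptl_sat w (length w + 1) (f (other z)) \<and> ptl_sat w (length w + 1) g)"
      apply (rule bex_cong[OF refl])
      subgoal for c by (cases c) (simp only: percl prod.case)
      done
    also have "\<dots> = dsat w s ?ds"
    proof -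
      have q: "csat w s (eclause z (R, f, g)) =
        ((\<exists>m. ?A m \<and> ptl_sat w m (f z)) \<and>
         ptl_sat w (length w + 1) (f (other z)) \<and> ptl_sat w (length w + 1) g)" for R f g
        by (auto simp: cmp_def)
      have "dsat w s ?ds = (\<exists>c\<in>set cs. rel z \<in> fst c \<and> csat w s (eclause z c))"
        unfolding dsat_def set_map set_filter
        by (auto simp del: csat.simps eclause.simps simp: split_beta) (metis fst_conv)+
      also have "\<dots> = (\<exists>c\<in>set cs. case c of (R, f, g) \<Rightarrow> rel z \<in> R \<and>
        (\<exists>m. ?A m \<and> ptl_sat w m (f z)) \<and>
         ptl_sat w (length w + 1) (f (other z)) \<and> ptl_sat w (length w + 1) g)"
        apply (rule bex_cong[OF refl])
        subgoal for c by (cases c) (simp only: q prod.case fst_conv)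
        done
      finally show ?thesis by simp
    qed
    finally show "pfo_sat w s (FEx z p) = dsat w s ?ds" .
  qed
qed

lemma good_main: "pfo_wf \<phi> \<Longrightarrow> good (\<lambda>w s. pfo_sat w s \<phi>)"
proof (induction \<phi>)
  case (FPi a z)
  show ?case unfolding good_def
    by (rule exI[of _ "[(UNIV, (\<lambda>_. ptrue)(z := PPi a), ptrue)]"]) (cases z; auto simp: dsat_def)
next
  case (FLess z z')
  show ?case unfolding good_def
  proof (cases "z = z'")
    case True then show "\<exists>cs. \<forall>w s. (\<forall>v. s v \<le> length w + 1) \<longrightarrow> pfo_sat w s (FLess z z') = dsat w s cs"
      by (intro exI[of _ "[]"]) (auto simp: dsat_def)
  next
    case False then show "\<exists>cs. \<forall>w s. (\<forall>v. s v \<le> length w + 1) \<longrightarrow> pfo_sat w s (FLess z z') = dsat w s cs"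
      by (intro exI[of _ "[({rel z}, \<lambda>_. ptrue, ptrue)]"])
        (cases z; cases z'; auto simp: dsat_def cmp_def rel_def)
  qed
next
  case (FAnd p q)
  then obtain cs ds where "\<forall>w s. (\<forall>v. s v \<le> length w + 1) \<longrightarrow> pfo_sat w s p = dsat w s cs"
     "\<forall>w s. (\<forall>v. s v \<le> length w + 1) \<longrightarrow> pfo_sat w s q = dsat w s ds"
    unfolding good_def by auto
  then show ?case unfolding good_def by (intro exI[of _ "dconj cs ds"]) (simp add: dconj_sat)
next
  case (FNot p)
  then obtain cs where "\<forall>w s. (\<forall>v. s v \<le> length w + 1) \<longrightarrow> pfo_sat w s p = dsat w s cs"
    unfolding good_def by auto
  then show ?case unfolding good_def by (intro exI[of _ "dneg cs"]) (simp add: dneg_sat)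
next
  case (FExLess z z' p)
  then have "z' = other z" "good (\<lambda>w s. pfo_sat w s p)" using other_cases by auto
  then show ?case using good_exless by blast
next
  case (FEx z p)
  then show ?case using good_ex by auto
qed

lemma dir2:
  assumes "pfo_sentence \<phi>" "L = pfo_lang \<phi>"
  shows "ptl_definable L"
proof -
  obtain cs where cs: "\<And>w s. (\<forall>v. s v \<le> length w + 1) \<Longrightarrow> pfo_sat w s \<phi> = dsat w s cs"
    using good_main assms(1) unfolding good_def pfo_sentence_def by blast
  let ?p = "bigor (map (\<lambda>(R, f, g). PAnd (f VX) (PAnd (f VY) g)) (filter (\<lambda>(R, f, g). CEQ \<in> R) cs))"
  have "pfo_models w \<phi> = ptl_models w ?p" for w
  proof -
    have "pfo_models w \<phi> = dsat w (\<lambda>_. length w + 1) cs"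
      unfolding pfo_models_def by (rule cs) simp
    also have "\<dots> = ptl_models w ?p"
      unfolding ptl_models_def bigor_sat dsat_def
      apply (auto simp: cmp_def split: prod.splits)
      apply fastforce
      subgoal for a aa b by (rule bexI[of _ "(a, aa, b)"]) (auto simp: cmp_def)
      done
    finally show ?thesis .
  qed
  then show ?thesis unfolding ptl_definable_def assms(2) pfo_lang_def ptl_lang_def
    by (intro exI[of _ ?p]) auto
qed

theorem mainTheorem1:
  fixes L :: "('a::finite) list set"
  shows "ptl_definable L \<longleftrightarrow> (\<exists>\<phi> :: 'a pfo. pfo_sentence \<phi> \<and> L = pfo_lang \<phi>)"
  using dir1 dir2 by blast

end
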